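(* In the $\{0,1\}$-speed SSP problem, for any constant $\epsilon>0$, the following partitioning algorithm is $(1+\epsilon)$-consistent and $2(1+\epsilon)$-robust: given the prediction $\hat m$ and processing times $p_1,\dots,p_n$, first use a PTAS with accuracy $\epsilon$ to partition the jobs into $\hat m$ subsets $F_1,\dots,F_{\hat m}$ (with $p(F_1)\ge\dots\ge p(F_{\hat m})$) whose maximum total processing time is at most $(1+\epsilon)opt(\mathbf p,\hat m)$; then partition each $F_i$ by the LPT algorithm into $\lfloor m/\hat m\rfloor$ or $\lceil m/\hat m\rceil$ bags, such that there are a total of $m$ bags; return these $m$ bags.
   Context: $\{0,1\}$-speed SSP: there are $n$ jobs with processing times $p_1,\dots,p_n\ge0$ and $m$ machines, each of which has speed either $0$ (unavailable) or $1$ (available). In the partitioning stage the algorithm knows $\mathbf p$, $m$ and a prediction $\hat m\in\{1,\dots,m\}$ of the number of available machines, and partitions the jobs into $m$ possibly empty bags; for a bag $B$, $p(B)=\sum_{j\in B}p_j$. In the scheduling stage the actual number $m_0\ge1$ of available machines is revealed and the bags are assigned whole to the $m_0$ identical unit-speed machines; the makespan is the maximum total processing time on a machine. $opt(\mathbf p,x)$ is the minimum makespan of scheduling the individual jobs on $x$ identical unit-speed machines. For a partitioning algorithm, $alg(\mathbf p,\hat m,m_0)$ is the makespan obtained by assigning its bags optimally to the $m_0$ machines. It is $c$-consistent if $alg(\mathbf p,m_0,m_0)\le c\cdot opt(\mathbf p,m_0)$ for all $\mathbf p,m_0$, and $\beta$-robust if $alg(\mathbf p,\hat m,m_0)\le\beta\cdot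 opt(\mathbf p,m_0)$ for all $\mathbf p,\hat m,m_0$. LPT partition of a job set into $k$ bags: consider the jobs in non-increasing order of processing time and put each job into a bag of currently minimum total processing time. *)

theory Defs
  imports Complex_Main "HOL-Library.FuncSet"
begin

definition load :: "(nat \<Rightarrow> real) \<Rightarrow> nat \<Rightarrow> (nat \<Rightarrow> nat) \<Rightarrow> nat \<Rightarrow> real" where
  "load p n a i = (\<Sum>j\<in>{j. j < n \<and> a j = i}. p j)"

definition makespan :: "(nat \<Rightarrow> real) \<Rightarrow> nat \<Rightarrow> nat \<Rightarrow> (nat \<Rightarrow> nat) \<Rightarrow> real" where
  "makespan p n x a = Max (load p n a ` {..<x})"

definition opt :: "(nat \<Rightarrow> real) \<Rightarrow> nat \<Rightarrow> nat \<Rightarrow> real" where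
  "opt p n x = Min ((\<lambda>a. makespan p n x a) ` ({..<n} \<rightarrow>\<^sub>E {..<x}))"

text \<open>Makespan obtained by assigning the m bags (bag j = bag of job j) optimally
  to m0 machines.\<close>
definition alg_value :: "(nat \<Rightarrow> real) \<Rightarrow> nat \<Rightarrow> nat \<Rightarrow> (nat \<Rightarrow> nat) \<Rightarrow> nat \<Rightarrow> real" where
  "alg_value p n m bag m0 =
     Min ((\<lambda>g. makespan p n m0 (g \<circ> bag)) ` ({..<m} \<rightarrow>\<^sub>E {..<m0}))"

text \<open>l restricted to the job set S is an LPT partition of S into k bags (any
  tie-breaking): there is an ordering of S by non-increasing processing time such
  that each job goes into a bag of currently minimum total processing time.\<close>
definition is_LPT :: "(nat \<Rightarrow> real) \<Rightarrow> nat set \<Rightarrow> nat \<Rightarrow> (nat \<Rightarrow> nat) \<Rightarrow> bool" where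
  "is_LPT p S k l \<longleftrightarrow>
     (\<forall>j\<in>S. l j < k) \<and>
     (\<exists>\<sigma>. distinct \<sigma> \<and> set \<sigma> = S \<and>
        (\<forall>t t'. t < t' \<and> t' < length \<sigma> \<longrightarrow> p (\<sigma> ! t) \<ge> p (\<sigma> ! t')) \<and>
        (\<forall>t < length \<sigma>. \<forall>b < k.
            (\<Sum>t'\<in>{t'. t' < t \<and> l (\<sigma> ! t') = l (\<sigma> ! t)}. p (\<sigma> ! t'))
          \<le> (\<Sum>t'\<in>{t'. t' < t \<and> l (\<sigma> ! t') = b}. p (\<sigma> ! t'))))"

text \<open>Number of bags for subset F_i (0-indexed): the first (m mod mh) subsets
  (the largest ones) get ceil(m/mh) bags, the others floor(m/mh); total is m.\<close>
definition nbags :: "nat \<Rightarrow> nat \<Rightarrow> nat \<Rightarrow> nat" where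
  "nbags m mh i = (if i < m mod mh then m div mh + 1 else m div mh)"

definition bag_offset :: "nat \<Rightarrow> nat \<Rightarrow> nat \<Rightarrow> nat" where
  "bag_offset m mh i = (\<Sum>i'<i. nbags m mh i')"

definition alg_output ::
  "real \<Rightarrow> (nat \<Rightarrow> real) \<Rightarrow> nat \<Rightarrow> nat \<Rightarrow> nat \<Rightarrow> (nat \<Rightarrow> nat) \<Rightarrow> bool" where
  "alg_output eps p n m mh bag \<longleftrightarrow>
     (\<exists>F l. (\<forall>j<n. F j < mh) \<and>
        makespan p n mh F \<le> (1 + eps) * opt p n mh \<and>
        (\<forall>i i'. i \<le> i' \<and> i' < mh \<longrightarrow> load p n F i \<ge> load p n F i') \<and>
        (\<forall>i<mh. is_LPT p {j. j < n \<and> F j = i} (nbags m mh i) l) \<and>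
        (\<forall>j<n. bag j = bag_offset m mh (F j) + l j))"

end

theory Submission
  imports Defs
begin


lemma load_alt: "load p n a i = (\<Sum>j<n. if a j = i then p j else 0)"
  unfolding load_def by (rule trans[OF _ sum.inter_filter]) (auto intro: sum.cong)

lemma load_cong: "(\<forall>j<n. a j = b j) \<Longrightarrow> load p n a i = load p n b i"
  unfolding load_alt by (auto intro: sum.cong)

lemma makespan_cong: "(\<forall>j<n. a j = b j) \<Longrightarrow> makespan p n x a = makespan p n x b"
  unfolding makespan_def using load_cong[of n a b p] by simp

lemma load_nonneg: "(\<forall>j<n. p j \<ge> 0) \<Longrightarrow> load p n a i \<ge> 0"
  unfolding load_def by (auto intro: sum_nonneg)

lemma load_le_makespan: "i < x \<Longrightarrow> load p n a i \<le> makespan p n x a"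
  unfolding makespan_def by (auto intro: Max_ge)

lemma makespan_le: "x \<ge> 1 \<Longrightarrow> (\<forall>i<x. load p n a i \<le> B) \<Longrightarrow> makespan p n x a \<le> B"
  unfolding makespan_def by (subst Max_le_iff) (auto simp: lessThan_empty_iff)

lemma PiE_ne: "x \<ge> 1 \<Longrightarrow> ({..<n::nat} \<rightarrow>\<^sub>E {..<x::nat}) \<noteq> {}"
  by (auto simp: PiE_eq_empty_iff lessThan_empty_iff)

lemma opt_attained: "x \<ge> 1 \<Longrightarrow> \<exists>a \<in> {..<n} \<rightarrow>\<^sub>E {..<x}. opt p n x = makespan p n x a"
proof -
  assume "x \<ge> 1"
  hence "opt p n x \<in> (\<lambda>a. makespan p n x a) ` ({..<n} \<rightarrow>\<^sub>E {..<x})"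
    unfolding opt_def using PiE_ne[of x n] by (intro Min_in) (auto simp: finite_PiE)
  thus ?thesis by auto
qed

lemma opt_le: "a \<in> {..<n} \<rightarrow>\<^sub>E {..<x} \<Longrightarrow> opt p n x \<le> makespan p n x a"
  unfolding opt_def by (rule Min_le) (auto simp: finite_PiE)

lemma alg_value_le: "g \<in> {..<m} \<rightarrow>\<^sub>E {..<m0} \<Longrightarrow> alg_value p n m bag m0 \<le> makespan p n m0 (g \<circ> bag)"
  unfolding alg_value_def by (rule Min_le) (auto simp: finite_PiE)

lemma load_comp:
  assumes "\<forall>j<n. a j < m"
  shows "load p n (f \<circ> a) i = (\<Sum>y\<in>{y. y<m \<and> f y = i}. load p n a y)"
proof -
  have "(\<Sum>y\<in>{y. y<m \<and> f y = i}. load p n a y)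
      = (\<Sum>y\<in>{y. y<m \<and> f y = i}. sum p {j. j \<in> {j. j<n \<and> f (a j) = i} \<and> a j = y})"
    unfolding load_def by (rule sum.cong) (auto intro: arg_cong[where f="sum p"])
  also have "\<dots> = sum p {j. j<n \<and> f (a j) = i}"
    by (rule sum.group) (use assms in auto)
  finally show ?thesis unfolding load_def by simp
qed

lemma sum_loads:
  assumes "\<forall>j<n. a j < x"
  shows "(\<Sum>i<x. load p n a i) = (\<Sum>j<n. p j)"
proof -
  have "(\<Sum>i<x. load p n a i) = (\<Sum>i<x. sum p {j. j \<in> {..<n} \<and> a j = i})"
    unfolding load_def by (rule sum.cong) auto
  also have "\<dots> = sum p {..<n}"
    by (rule sum.group) (use assms in auto)
  finally show ?thesis .
qed

lemma total_le_opt: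
  assumes "x \<ge> 1" 
  shows "(\<Sum>j<n. p j) \<le> real x * opt p n x"
proof -
  obtain a where a: "a \<in> {..<n} \<rightarrow>\<^sub>E {..<x}" "opt p n x = makespan p n x a"
    using opt_attained[OF assms] by blast
  have "(\<Sum>j<n. p j) = (\<Sum>i<x. load p n a i)"
    using a(1) by (subst sum_loads) auto
  also have "\<dots> \<le> (\<Sum>i<x. makespan p n x a)"
    by (rule sum_mono) (auto intro: load_le_makespan)
  finally show ?thesis using a by simp
qed

lemma pj_le_opt:
  assumes "x \<ge> 1" "j < n" "\<forall>j<n. p j \<ge> 0"
  shows "p j \<le> opt p n x"
proof -
  obtain a where a: "a \<in> {..<n} \<rightarrow>\<^sub>E {..<x}" "opt p n x = makespan p n x a"
    using opt_attained[OF assms(1)] by blast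
  have "p j \<le> load p n a (a j)"
    unfolding load_def using assms by (intro member_le_sum) auto
  also have "\<dots> \<le> makespan p n x a"
    using a(1) assms by (intro load_le_makespan) auto
  finally show ?thesis using a by simp
qed

lemma opt_nonneg:
  assumes "x \<ge> 1" "\<forall>j<n. p j \<ge> 0"
  shows "opt p n x \<ge> 0"
proof -
  obtain a where a: "a \<in> {..<n} \<rightarrow>\<^sub>E {..<x}" "opt p n x = makespan p n x a"
    using opt_attained[OF assms(1)] by blast
  have "0 \<le> load p n a 0" using load_nonneg assms by blast
  also have "\<dots> \<le> makespan p n x a" using assms by (intro load_le_makespan) auto
  finally show ?thesis using a by simp
qed

lemma opt_mono:
  assumes "1 \<le> m0" "m0 \<le> m" "\<forall>j<n. p j \<ge> 0"
  shows "opt p n m \<le> opt p n m0"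
proof -
  obtain a where a: "a \<in> {..<n} \<rightarrow>\<^sub>E {..<m0}" "opt p n m0 = makespan p n m0 a"
    using opt_attained[OF assms(1)] by blast
  have "a \<in> {..<n} \<rightarrow>\<^sub>E {..<m}" using a(1) assms by (force simp: PiE_iff)
  hence "opt p n m \<le> makespan p n m a" by (rule opt_le)
  also have "\<dots> \<le> makespan p n m0 a"
  proof (rule makespan_le)
    show "\<forall>i<m. load p n a i \<le> makespan p n m0 a"
    proof (intro allI impI)
      fix i assume "i < m"
      show "load p n a i \<le> makespan p n m0 a"
      proof (cases "i < m0")
        case True thus ?thesis by (rule load_le_makespan)
      next
        case False
        hence "load p n a i = 0" unfolding load_def using a(1) by (intro sum.neutral) auto
        also have "0 \<le> load p n a 0" using load_nonneg assms by blast
        also have "\<dots> \<le> makespan p n m0 a" using assms by (intro load_le_makespan) auto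
        finally show ?thesis .
      qed
    qed
  qed (use assms in auto)
  finally show ?thesis using a by simp
qed



lemma card_div_class: "(c::nat) > 0 \<Longrightarrow> card {y. y < m \<and> y div c = i} \<le> c"
proof -
  assume c: "c > 0"
  have "{y. y < m \<and> y div c = i} \<subseteq> {i*c..<i*c+c}"
  proof
    fix y assume "y \<in> {y. y < m \<and> y div c = i}"
    hence "y div c = i" by simp
    moreover have "y = y div c * c + y mod c" by simp
    moreover have "y mod c < c" using c by simp
    ultimately show "y \<in> {i*c..<i*c+c}" by auto
  qed
  hence "card {y. y < m \<and> y div c = i} \<le> card {i*c..<i*c+c}" by (intro card_mono) auto
  thus ?thesis by simp
qed

lemma opt_merge:
  assumes "1 \<le> mh" "mh \<le> m" "\<forall>j<n. p j \<ge> 0"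
  shows "opt p n mh \<le> real (m div mh + 1) * opt p n m"
proof -
  define c where "c = m div mh + 1"
  have m1: "1 \<le> m" using assms by simp
  obtain a where a: "a \<in> {..<n} \<rightarrow>\<^sub>E {..<m}" "opt p n m = makespan p n m a"
    using opt_attained[OF m1] by blast
  have am: "\<forall>j<n. a j < m" using a(1) by (force simp: PiE_iff)
  have mlt: "m < c * mh"
  proof -
    have "m mod mh < mh" using assms by simp
    moreover have "mh * (m div mh) + m mod mh = m" by (rule mult_div_mod_eq)
    ultimately have "m < mh + mh * (m div mh)" by linarith
    thus ?thesis unfolding c_def by (simp add: algebra_simps)
  qed
  define f where "f = (\<lambda>y::nat. y div c)"
  define a' where "a' = restrict (f \<circ> a) {..<n}"
  have a'P: "a' \<in> {..<n} \<rightarrow>\<^sub>E {..<mh}"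
  proof -
    have "f (a j) < mh" if "j < n" for j
    proof -
      have "a j < mh * c" using am that mlt by (metis mult.commute order.strict_trans)
      thus ?thesis unfolding f_def by (rule less_mult_imp_div_less)
    qed
    thus ?thesis unfolding a'_def by auto
  qed
  have "opt p n mh \<le> makespan p n mh a'" using a'P by (rule opt_le)
  also have "\<dots> \<le> real c * makespan p n m a"
  proof (rule makespan_le)
    show "\<forall>i<mh. load p n a' i \<le> real c * makespan p n m a"
    proof (intro allI impI)
      fix i assume "i < mh"
      have "load p n a' i = load p n (f \<circ> a) i"
        unfolding a'_def by (rule load_cong) auto
      also have "\<dots> = (\<Sum>y\<in>{y. y<m \<and> f y = i}. load p n a y)"
        using am by (rule load_comp)
      also have "\<dots> \<le> (\<Sum>y\<in>{y. y<m \<and> f y = i}. makespan p n m a)"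
        by (rule sum_mono) (auto intro: load_le_makespan)
      also have "\<dots> = real (card {y. y<m \<and> f y = i}) * makespan p n m a" by simp
      also have "\<dots> \<le> real c * makespan p n m a"
      proof (rule mult_right_mono)
        show "real (card {y. y<m \<and> f y = i}) \<le> real c"
          unfolding f_def using card_div_class[of c m i] c_def by simp
        show "0 \<le> makespan p n m a" using a(2) opt_nonneg[OF m1 assms(3)] by simp
      qed
      finally show "load p n a' i \<le> real c * makespan p n m a" .
    qed
  qed (use assms in auto)
  finally show ?thesis using a(2) c_def by simp
qed

lemma bag_offset_mono: "i \<le> i' \<Longrightarrow> bag_offset m mh i \<le> bag_offset m mh i'"
  unfolding bag_offset_def by (rule sum_mono2) auto

lemma bag_offset_Suc: "bag_offset m mh (Suc i) = bag_offset m mh i + nbags m mh i"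
  unfolding bag_offset_def by simp

lemma bag_offset_lt: "l < nbags m mh i \<Longrightarrow> i < i' \<Longrightarrow> bag_offset m mh i + l < bag_offset m mh i'"
  using bag_offset_mono[of "Suc i" i' m mh] bag_offset_Suc[of m mh i] by simp

lemma bag_offset_inj:
  assumes "l < nbags m mh i" "l' < nbags m mh i'" "bag_offset m mh i + l = bag_offset m mh i' + l'"
  shows "i = i'"
  using bag_offset_lt[OF assms(1), of i'] bag_offset_lt[OF assms(2), of i] assms(3)
  by (cases "i < i'"; cases "i' < i") auto

lemma bag_offset_r: "r \<le> mh \<Longrightarrow> r \<le> m mod mh \<Longrightarrow> bag_offset m mh r = r * (m div mh + 1)"
  by (induction r) (auto simp: bag_offset_Suc nbags_def bag_offset_def)

lemma bag_offset_total:
  assumes "1 \<le> mh" shows "bag_offset m mh mh = m"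
proof -
  have "bag_offset m mh mh = bag_offset m mh (m mod mh) + (mh - m mod mh) * (m div mh)"
  proof -
    have "bag_offset m mh (m mod mh + d) = bag_offset m mh (m mod mh) + d * (m div mh)" for d
      by (induction d) (auto simp: bag_offset_Suc nbags_def)
    from this[of "mh - m mod mh"] show ?thesis using assms by simp
  qed
  also have "\<dots> = (m mod mh) * (m div mh + 1) + (mh - m mod mh) * (m div mh)"
    using assms by (subst bag_offset_r) auto
  also have "\<dots> = m"
  proof -
    have "m mod mh \<le> mh" using assms by (simp add: less_imp_le)
    then obtain d where d: "mh = m mod mh + d" using le_Suc_ex by blast
    hence "(m mod mh) * (m div mh + 1) + (mh - m mod mh) * (m div mh) = mh * (m div mh) + m mod mh"
      by (simp add: algebra_simps)
    thus ?thesis by simp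
  qed
  finally show ?thesis .
qed



lemma lpt_index:
  fixes q :: "nat \<Rightarrow> real" and lab :: "nat \<Rightarrow> nat"
  assumes q0: "\<forall>t<N. q t \<ge> 0" and labk: "\<forall>t<N. lab t < k" and c: "c < k"
    and cond: "\<forall>t<N. \<forall>b<k. (\<Sum>t'\<in>{t'. t'<t \<and> lab t' = lab t}. q t') \<le> (\<Sum>t'\<in>{t'. t'<t \<and> lab t' = b}. q t')"
    and Pm: "\<forall>t<N. q t \<le> Pm" "Pm \<ge> 0"
  shows "real k * (\<Sum>t\<in>{t. t<N \<and> lab t = c}. q t) \<le> (\<Sum>t<N. q t) + (real k - 1) * Pm"
proof (cases "{t. t<N \<and> lab t = c} = {}")
  case True
  have "0 \<le> (\<Sum>t<N. q t)" using q0 by (intro sum_nonneg) auto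
  moreover have "0 \<le> (real k - 1) * Pm" using c Pm(2) by simp
  ultimately show ?thesis by (simp only: True sum.empty)
next
  case False
  define A where "A = {t. t<N \<and> lab t = c}"
  have finA: "finite A" unfolding A_def by simp
  define t0 where "t0 = Max A"
  have t0A: "t0 \<in> A" unfolding t0_def using finA False A_def by (intro Max_in) auto
  hence t0N: "t0 < N" and labt0: "lab t0 = c" unfolding A_def by auto
  have Aeq: "A = insert t0 {t. t<t0 \<and> lab t = c}"
  proof -
    have "t \<le> t0" if "t \<in> A" for t unfolding t0_def using finA that by (rule Max_ge)
    thus ?thesis using t0A t0N unfolding A_def by fastforce
  qed
  define L where "L = (\<Sum>t\<in>{t. t<t0 \<and> lab t = c}. q t)"
  have sumA: "(\<Sum>t\<in>A. q t) = q t0 + L"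
    unfolding L_def by (subst Aeq) (subst sum.insert, auto)
  have "real k * L = (\<Sum>b<k. L)" by simp
  also have "\<dots> \<le> (\<Sum>b<k. (\<Sum>t'\<in>{t'. t'<t0 \<and> lab t' = b}. q t'))"
    using cond t0N labt0 unfolding L_def by (intro sum_mono) auto
  also have "\<dots> = (\<Sum>b<k. (\<Sum>t'\<in>{t'. t' \<in> {..<t0} \<and> lab t' = b}. q t'))"
    by (intro sum.cong) (auto intro: arg_cong[where f="sum q"])
  also have "\<dots> = (\<Sum>t<t0. q t)"
    by (rule sum.group) (use labk t0N in auto)
  finally have kL: "real k * L \<le> (\<Sum>t<t0. q t)" .
  have "(\<Sum>t<t0. q t) + q t0 = (\<Sum>t<Suc t0. q t)" by simp
  also have "\<dots> \<le> (\<Sum>t<N. q t)"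
    using t0N q0 by (intro sum_mono2) auto
  finally have s2: "(\<Sum>t<t0. q t) + q t0 \<le> (\<Sum>t<N. q t)" .
  have "real k * (\<Sum>t\<in>A. q t) = real k * q t0 + real k * L" by (simp add: sumA algebra_simps)
  also have "\<dots> \<le> (\<Sum>t<N. q t) + (real k - 1) * q t0" using kL s2 by (simp add: algebra_simps)
  also have "\<dots> \<le> (\<Sum>t<N. q t) + (real k - 1) * Pm"
    using c Pm t0N by (intro add_left_mono mult_left_mono) auto
  finally show ?thesis unfolding A_def .
qed

lemma lpt_bag:
  assumes "is_LPT p S k l" and p0: "\<forall>j\<in>S. p j \<ge> 0" and Pm: "\<forall>j\<in>S. p j \<le> Pm" "Pm \<ge> 0"
    and c: "c < k"
  shows "real k * (\<Sum>j\<in>{j\<in>S. l j = c}. p j) \<le> (\<Sum>j\<in>S. p j) + (real k - 1) * Pm"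
proof -
  from assms(1) obtain \<sigma> where lk: "\<forall>j\<in>S. l j < k" and d: "distinct \<sigma>" and s: "set \<sigma> = S"
    and cond: "\<forall>t < length \<sigma>. \<forall>b < k.
            (\<Sum>t'\<in>{t'. t' < t \<and> l (\<sigma> ! t') = l (\<sigma> ! t)}. p (\<sigma> ! t'))
          \<le> (\<Sum>t'\<in>{t'. t' < t \<and> l (\<sigma> ! t') = b}. p (\<sigma> ! t'))"
    unfolding is_LPT_def by blast
  define N where "N = length \<sigma>"
  have inS: "\<sigma> ! t \<in> S" if "t < N" for t using that s N_def by auto
  have r1: "(\<Sum>j\<in>{j\<in>S. l j = c}. p j) = (\<Sum>t\<in>{t. t<N \<and> l (\<sigma>!t) = c}. p (\<sigma>!t))"
  proof -
    have "inj_on (nth \<sigma>) {t. t<N \<and> l (\<sigma>!t) = c}" using d N_def by (intro inj_on_nth) auto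
    moreover have "(nth \<sigma>) ` {t. t<N \<and> l (\<sigma>!t) = c} = {j\<in>S. l j = c}"
      using s N_def by (auto simp: in_set_conv_nth)
    ultimately show ?thesis using sum.reindex[of "nth \<sigma>" "{t. t<N \<and> l (\<sigma>!t) = c}" p] by simp
  qed
  have r2: "(\<Sum>j\<in>S. p j) = (\<Sum>t<N. p (\<sigma>!t))"
  proof -
    have "inj_on (nth \<sigma>) {..<N}" using d N_def by (intro inj_on_nth) auto
    moreover have "(nth \<sigma>) ` {..<N} = S"
      using s N_def by (auto simp: in_set_conv_nth)
    ultimately show ?thesis using sum.reindex[of "nth \<sigma>" "{..<N}" p] by simp
  qed
  have "real k * (\<Sum>t\<in>{t. t<N \<and> l (\<sigma>!t) = c}. p (\<sigma>!t)) \<le> (\<Sum>t<N. p (\<sigma>!t)) + (real k - 1) * Pm"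
    by (rule lpt_index[where lab="\<lambda>t. l (\<sigma>!t)"])
       (use inS p0 lk c cond Pm N_def in auto)
  thus ?thesis using r1 r2 by simp
qed



lemma load_upd:
  assumes "b < N"
  shows "load s N (h(b:=y)) z = load s N h z - (if h b = z then s b else 0) + (if y = z then s b else 0)"
proof -
  have fin: "finite {..<N}" by simp
  have bin: "b \<in> {..<N}" using assms by simp
  have e: "(\<Sum>j\<in>{..<N}-{b}. if (h(b:=y)) j = z then s j else 0) = (\<Sum>j\<in>{..<N}-{b}. if h j = z then s j else 0)"
    by (rule sum.cong) auto
  show ?thesis unfolding load_alt
    using sum.remove[OF fin bin, of "\<lambda>j. if (h(b:=y)) j = z then s j else 0"]
      sum.remove[OF fin bin, of "\<lambda>j. if h j = z then s j else 0"] e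
    by (simp add: lessThan_def)
qed

lemma ls_exists:
  fixes s :: "nat \<Rightarrow> real"
  assumes s0: "\<forall>b<N. s b \<ge> 0" and m0: "m0 \<ge> 1" and sM: "\<forall>b<N. s b \<le> M"
  shows "\<exists>h \<in> {..<N} \<rightarrow>\<^sub>E {..<m0}. \<forall>x<m0. load s N h x \<le> M \<or>
            real (m0+1) * load s N h x \<le> 2 * (\<Sum>b<N. s b)"
proof -
  define H where "H = {..<N} \<rightarrow>\<^sub>E {..<m0}"
  define \<Phi> where "\<Phi> = (\<lambda>h. \<Sum>x<m0. (load s N h x)\<^sup>2)"
  have finH: "finite H" unfolding H_def by (simp add: finite_PiE)
  have neH: "H \<noteq> {}" unfolding H_def using PiE_ne[OF m0] .
  obtain h where hH: "h \<in> H" and hmin: "\<Phi> h = Min (\<Phi> ` H)"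
  proof -
    have "Min (\<Phi> ` H) \<in> \<Phi> ` H" using finH neH by (intro Min_in) auto
    then obtain h' where "h' \<in> H" "Min (\<Phi> ` H) = \<Phi> h'" by (auto simp: image_iff)
    thus ?thesis using that by simp
  qed
  have hopt: "\<Phi> h \<le> \<Phi> h'" if "h' \<in> H" for h'
    unfolding hmin using finH that by (intro Min_le) auto
  have hN: "\<forall>j<N. h j < m0" using hH unfolding H_def by (force simp: PiE_iff)
  define S where "S = (\<Sum>b<N. s b)"
  have S0: "S \<ge> 0" unfolding S_def using s0 by (intro sum_nonneg) auto
  have Sl: "S = (\<Sum>z<m0. load s N h z)" unfolding S_def using hN by (subst sum_loads) auto
  have Lnn: "load s N h z \<ge> 0" for z using s0 by (rule load_nonneg)
  have locopt: "load s N h y \<ge> load s N h x - s b"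
    if b: "b < N" "h b = x" "x < m0" "y < m0" "y \<noteq> x" "s b > 0" for b x y
  proof -
    define h' where "h' = h(b:=y)"
    have h'H: "h' \<in> H" using hH b unfolding H_def h'_def by (auto simp: PiE_iff extensional_def)
    define f where "f = (\<lambda>z. (load s N h' z)\<^sup>2 - (load s N h z)\<^sup>2)"
    have "\<Phi> h' - \<Phi> h = (\<Sum>z<m0. f z)" unfolding \<Phi>_def f_def by (simp add: sum_subtractf)
    also have "\<dots> = (\<Sum>z\<in>{x,y}. f z)"
    proof (rule sum.mono_neutral_right)
      show "\<forall>i\<in>{..<m0} - {x, y}. f i = 0"
        unfolding f_def h'_def using b by (auto simp: load_upd)
    qed (use b in auto)
    also have "\<dots> = f x + f y" using b by simp
    also have "\<dots> = 2 * s b * (load s N h y + s b - load s N h x)"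
      unfolding f_def h'_def using b by (simp add: load_upd power2_eq_square algebra_simps)
    finally have "0 \<le> 2 * s b * (load s N h y + s b - load s N h x)"
      using hopt[OF h'H] by simp
    thus ?thesis using b(6) by (simp add: zero_le_mult_iff)
  qed
  have claim1: "real (m0+1) * load s N h x \<le> 2 * S"
    if b: "b < N" "h b = x" "x < m0" "s b > 0" "2 * s b \<le> load s N h x" for b x
  proof -
    define T where "T = load s N h x"
    have "S = T + (\<Sum>z\<in>{..<m0}-{x}. load s N h z)"
      unfolding Sl T_def using b by (subst sum.remove[of _ x]) auto
    moreover have "(\<Sum>z\<in>{..<m0}-{x}. load s N h z) \<ge> (\<Sum>z\<in>{..<m0}-{x}. T - s b)"
      unfolding T_def using locopt b by (intro sum_mono) auto
    moreover have "(\<Sum>z\<in>{..<m0}-{x}. T - s b) = (real m0 - 1) * (T - s b)"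
      using b m0 by (simp add: of_nat_diff)
    moreover have "(real m0 - 1) * (T - s b) \<ge> (real m0 - 1) * (T / 2)"
      using b m0 unfolding T_def by (intro mult_left_mono) auto
    ultimately have "S \<ge> T + (real m0 - 1) * (T / 2)" by linarith
    moreover have "real (m0+1) * T = 2*(T + (real m0 - 1)*(T/2))" by (simp add: field_simps)
    ultimately have "real (m0+1) * T \<le> 2 * S" by (metis mult_left_mono zero_le_numeral)
    thus ?thesis unfolding T_def .
  qed
  have "\<forall>x<m0. load s N h x \<le> M \<or> real (m0+1) * load s N h x \<le> 2 * S"
  proof (intro allI impI)
    fix x assume x: "x < m0"
    define T where "T = load s N h x"
    have Tsum: "T = sum s {j. j < N \<and> h j = x}" unfolding T_def load_def by simp
    show "load s N h x \<le> M \<or> real (m0+1) * load s N h x \<le> 2 * S"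
    proof (cases "\<exists>b b'. b<N \<and> b'<N \<and> b\<noteq>b' \<and> h b = x \<and> h b' = x \<and> s b>0 \<and> s b'>0")
      case True
      then obtain b b' where bb: "b<N" "b'<N" "b\<noteq>b'" "h b = x" "h b' = x" "s b>0" "s b'>0" by blast
      have "s b + s b' = sum s {b, b'}" using bb by simp
      also have "\<dots> \<le> T" unfolding Tsum using bb s0 by (intro sum_mono2) auto
      finally have sbb: "s b + s b' \<le> T" .
      show ?thesis
      proof (cases "s b \<le> s b'")
        case True
        thus ?thesis using claim1[of b x] bb x sbb unfolding T_def by auto
      next
        case False
        thus ?thesis using claim1[of b' x] bb x sbb unfolding T_def by auto
      qed
    next
      case False
      show ?thesis
      proof (cases "\<exists>b<N. h b = x \<and> s b > 0")
        case True
        then obtain b where b: "b < N" "h b = x" "s b > 0" by blast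
        have "T = s b + sum s ({j. j < N \<and> h j = x} - {b})"
          unfolding Tsum using b by (subst sum.remove[of _ b]) auto
        also have "sum s ({j. j < N \<and> h j = x} - {b}) = 0"
        proof (rule sum.neutral, intro ballI)
          fix j assume "j \<in> {j. j < N \<and> h j = x} - {b}"
          thus "s j = 0" using False b s0 by (metis (mono_tags, lifting) DiffE insertI1 mem_Collect_eq
                 order_less_le)
        qed
        finally show ?thesis unfolding T_def using sM b by auto
      next
        case False
        have "T = 0" unfolding Tsum using False s0 by (intro sum.neutral) (force simp: order_le_less)
        thus ?thesis unfolding T_def using S0 by auto
      qed
    qed
  qed
  thus ?thesis using hH unfolding H_def S_def by blast
qed



theorem theorem5:
  fixes eps :: real and p :: "nat \<Rightarrow> real" and n m mh :: nat and bag :: "nat \<Rightarrow> nat"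
  assumes "eps > 0"
    and "\<forall>j<n. p j \<ge> 0"
    and "1 \<le> mh" and "mh \<le> m"
    and "alg_output eps p n m mh bag"
  shows "alg_value p n m bag mh \<le> (1 + eps) * opt p n mh \<and>
         (\<forall>m0. 1 \<le> m0 \<and> m0 \<le> m \<longrightarrow> alg_value p n m bag m0 \<le> 2 * (1 + eps) * opt p n m0)"
proof -
  note eps = assms(1) and p0 = assms(2) and mh1 = assms(3) and mhm = assms(4)
  from assms(5) obtain F l where FF: "\<forall>j<n. F j < mh"
    and mk: "makespan p n mh F \<le> (1 + eps) * opt p n mh"
    and LPT: "\<forall>i<mh. is_LPT p {j. j < n \<and> F j = i} (nbags m mh i) l"
    and bagd: "\<forall>j<n. bag j = bag_offset m mh (F j) + l j"
    unfolding alg_output_def by blast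
  have m1: "1 \<le> m" using mh1 mhm by simp
  have ljk: "l j < nbags m mh (F j)" if "j < n" for j
    using LPT FF that unfolding is_LPT_def by auto
  have offm: "bag_offset m mh mh = m" using mh1 by (rule bag_offset_total)
  have bag_lt: "\<forall>j<n. bag j < m"
  proof (intro allI impI)
    fix j assume j: "j < n"
    have "bag j < bag_offset m mh (Suc (F j))"
      using bagd j ljk[OF j] by (simp add: bag_offset_Suc)
    also have "\<dots> \<le> bag_offset m mh mh" using FF j by (intro bag_offset_mono) auto
    finally show "bag j < m" using offm by simp
  qed
  define G where "G = (\<lambda>b. LEAST i. b < bag_offset m mh (Suc i))"
  define g where "g = restrict G {..<m}"
  have gP: "g \<in> {..<m} \<rightarrow>\<^sub>E {..<mh}"
  proof -
    have "G b < mh" if "b < m" for b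
    proof -
      have "b < bag_offset m mh (Suc (mh - 1))" using that offm mh1 by simp
      hence "G b \<le> mh - 1" unfolding G_def by (rule Least_le)
      thus ?thesis using mh1 by simp
    qed
    thus ?thesis unfolding g_def by auto
  qed
  have gF: "(g \<circ> bag) j = F j" if j: "j < n" for j
  proof -
    have "G (bag j) = F j" unfolding G_def
    proof (rule Least_equality)
      show "bag j < bag_offset m mh (Suc (F j))"
        using bagd j ljk[OF j] by (simp add: bag_offset_Suc)
      fix y assume y: "bag j < bag_offset m mh (Suc y)"
      show "F j \<le> y"
      proof (rule ccontr)
        assume "\<not> F j \<le> y"
        hence "bag_offset m mh (Suc y) \<le> bag_offset m mh (F j)" by (intro bag_offset_mono) auto
        thus False using y bagd j by simp
      qed
    qed
    thus ?thesis unfolding g_def using bag_lt j by simp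
  qed
  have cons: "alg_value p n m bag mh \<le> (1 + eps) * opt p n mh"
  proof -
    have "alg_value p n m bag mh \<le> makespan p n mh (g \<circ> bag)" using gP by (rule alg_value_le)
    also have "\<dots> = makespan p n mh F" using gF by (intro makespan_cong) auto
    finally show ?thesis using mk by simp
  qed
  define s where "s = load p n bag"
  define Om where "Om = opt p n m"
  have Om0: "Om \<ge> 0" unfolding Om_def using m1 p0 by (rule opt_nonneg)
  have K1: "1 \<le> m div mh" using mh1 mhm div_greater_zero_iff[of m mh] by simp
  have bagbound: "s b \<le> 2 * (1 + eps) * Om" if b: "b < m" for b
  proof (cases "\<exists>j<n. bag j = b")
    case False
    hence "s b = 0" unfolding s_def load_def by (intro sum.neutral) auto
    thus ?thesis using Om0 eps by simp
  next
    case True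
    then obtain j0 where j0: "j0 < n" "bag j0 = b" by blast
    define i where "i = F j0"
    define k where "k = nbags m mh i"
    define c where "c = l j0"
    have i: "i < mh" using FF j0 i_def by simp
    have ck: "c < k" using ljk[OF j0(1)] c_def k_def i_def by simp
    have Kk: "m div mh \<le> k" unfolding k_def nbags_def by simp
    have k1: "1 \<le> k" using K1 Kk by simp
    define Si where "Si = {j. j < n \<and> F j = i}"
    have seteq: "{j. j < n \<and> bag j = b} = {j\<in>Si. l j = c}"
    proof (intro set_eqI iffI)
      fix j assume "j \<in> {j. j < n \<and> bag j = b}"
      hence j: "j < n" "bag j = b" by auto
      have "bag_offset m mh (F j) + l j = bag_offset m mh i + c"
        using j j0 bagd i_def c_def by simp
      moreover have "F j = i"
        using bag_offset_inj[OF ljk[OF j(1)], of c i] ljk[OF j0(1)] j j0 bagd i_def c_def by simp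
      ultimately show "j \<in> {j\<in>Si. l j = c}" using j unfolding Si_def by simp
    next
      fix j assume "j \<in> {j\<in>Si. l j = c}"
      thus "j \<in> {j. j < n \<and> bag j = b}" using bagd j0 i_def c_def unfolding Si_def by auto
    qed
    have "real k * s b = real k * (\<Sum>j\<in>{j\<in>Si. l j = c}. p j)"
      unfolding s_def load_def seteq by simp
    also have "\<dots> \<le> (\<Sum>j\<in>Si. p j) + (real k - 1) * Om"
    proof (rule lpt_bag)
      show "is_LPT p Si k l" using LPT i unfolding Si_def k_def by simp
      show "\<forall>j\<in>Si. 0 \<le> p j" using p0 unfolding Si_def by simp
      show "\<forall>j\<in>Si. p j \<le> Om" using pj_le_opt[OF m1 _ p0] unfolding Si_def Om_def by simp
    qed (use Om0 ck in auto)
    also have "(\<Sum>j\<in>Si. p j) \<le> (1 + eps) * (real (m div mh + 1) * Om)"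
    proof -
      have "(\<Sum>j\<in>Si. p j) = load p n F i" unfolding Si_def load_def by simp
      also have "\<dots> \<le> makespan p n mh F" using i by (rule load_le_makespan)
      also have "\<dots> \<le> (1 + eps) * opt p n mh" by (rule mk)
      also have "\<dots> \<le> (1 + eps) * (real (m div mh + 1) * Om)"
        unfolding Om_def using opt_merge[OF mh1 mhm p0] eps by (intro mult_left_mono) auto
      finally show ?thesis .
    qed
    also have "(1 + eps) * (real (m div mh + 1) * Om) \<le> (1 + eps) * (real (k + 1) * Om)"
      using Kk eps Om0 by (intro mult_left_mono mult_right_mono) auto
    finally have ks: "real k * s b \<le> (1 + eps) * (real (k + 1) * Om) + (real k - 1) * Om" by simp
    have "real k * (2 * (1 + eps) * Om) - ((1 + eps) * (real (k + 1) * Om) + (real k - 1) * Om)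
          = (real k - 1) * eps * Om" by (simp add: algebra_simps)
    moreover have "(real k - 1) * eps * Om \<ge> 0" using k1 eps Om0 by simp
    ultimately have "real k * s b \<le> real k * (2 * (1 + eps) * Om)" using ks by linarith
    thus ?thesis using k1 by simp
  qed
  have rob: "alg_value p n m bag m0 \<le> 2 * (1 + eps) * opt p n m0" if m0: "1 \<le> m0" "m0 \<le> m" for m0
  proof -
    define Oz where "Oz = opt p n m0"
    have Oz0: "Oz \<ge> 0" unfolding Oz_def using m0(1) p0 by (rule opt_nonneg)
    have OOz: "Om \<le> Oz" unfolding Om_def Oz_def using m0 p0 by (rule opt_mono)
    define M where "M = 2 * (1 + eps) * Oz"
    have sM: "\<forall>b<m. s b \<le> M"
    proof (intro allI impI)
      fix b assume "b < m"
      hence "s b \<le> 2 * (1 + eps) * Om" by (rule bagbound)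
      also have "\<dots> \<le> M" unfolding M_def using OOz eps by simp
      finally show "s b \<le> M" .
    qed
    have s0: "\<forall>b<m. s b \<ge> 0" unfolding s_def using load_nonneg[OF p0] by simp
    obtain h where hP: "h \<in> {..<m} \<rightarrow>\<^sub>E {..<m0}"
      and hb: "\<forall>x<m0. load s m h x \<le> M \<or> real (m0+1) * load s m h x \<le> 2 * (\<Sum>b<m. s b)"
      using ls_exists[OF s0 m0(1) sM] by blast
    have Ssum: "(\<Sum>b<m. s b) \<le> real m0 * Oz"
    proof -
      have "(\<Sum>b<m. s b) = (\<Sum>j<n. p j)" unfolding s_def using bag_lt by (rule sum_loads)
      also have "\<dots> \<le> real m0 * Oz" unfolding Oz_def using m0(1) by (rule total_le_opt)
      finally show ?thesis .
    qed
    have "alg_value p n m bag m0 \<le> makespan p n m0 (h \<circ> bag)" using hP by (rule alg_value_le)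
    also have "\<dots> \<le> M"
    proof (rule makespan_le)
      show "\<forall>x<m0. load p n (h \<circ> bag) x \<le> M"
      proof (intro allI impI)
        fix x assume x: "x < m0"
        have eq: "load p n (h \<circ> bag) x = load s m h x"
          unfolding s_def using bag_lt by (subst load_comp) (auto simp: load_def)
        from hb x have "load s m h x \<le> M \<or> real (m0+1) * load s m h x \<le> 2 * (\<Sum>b<m. s b)" by blast
        thus "load p n (h \<circ> bag) x \<le> M"
        proof
          assume "load s m h x \<le> M" thus ?thesis using eq by simp
        next
          assume a: "real (m0+1) * load s m h x \<le> 2 * (\<Sum>b<m. s b)"
          have "real (m0+1) * load s m h x \<le> real (m0+1) * (2 * Oz)"
            using a Ssum Oz0 by (simp add: algebra_simps)
          hence "load s m h x \<le> 2 * Oz" by (simp add: mult_le_cancel_left_pos)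
          also have "\<dots> \<le> M" unfolding M_def using mult_nonneg_nonneg[of eps Oz] Oz0 eps by (simp add: algebra_simps)
          finally show ?thesis using eq by simp
        qed
      qed
    qed (use m0 in auto)
    finally show ?thesis unfolding M_def Oz_def .
  qed
  show ?thesis using cons rob by blast
qed

end
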